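(* Let $Q$ be a quiver with no oriented cycles, $\theta\in\mathbb{Z}^{Q_0}$, and let $\alpha_1\ne\alpha_2\in Q_1$ be arrows with $\alpha_1^-=\alpha_2^-$ and $\alpha_1^+=\alpha_2^+$. Let $Q'$ be obtained from $Q$ by collapsing $\alpha_1,\alpha_2$ to a single arrow $\alpha$, and let $\varphi:F\to\mathcal{A}(Q,\theta)$, $\varphi':F'\to\mathcal{A}(Q',\theta)$, $\pi:F\to F'$ and $\psi_s$ be as in the context. Let $\{u_\lambda-v_\lambda\mid\lambda\in\Lambda\}$ be a set of binomials generating the ideal $\ker(\varphi')$. Then $\ker(\varphi)$ is generated by $\mathcal{G}_1\cup\mathcal{G}_2$, where $\mathcal{G}_1=\{\psi_s(u_\lambda)-\psi_s(v_\lambda)\mid\lambda\in\Lambda,\ s\in S(Q,\theta),\ x^{\pi(s)}=\varphi'(u_\lambda)\}$ and $\mathcal{G}_2=\{t_mt_n-t_{m+\varepsilon_2-\varepsilon_1}t_{n+\varepsilon_1-\varepsilon_2}\mid m,n\in\nabla(Q,\theta)\cap\mathbb{Z}^{Q_1},\ m(\alpha_1)>0,\ n(\alpha_2)>0\}$, with $\varepsilon_i\in\mathbb{Z}^{Q_1}$ the characteristic function of $\alpha_i$.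
   Context: For a quiver $Q$ (vertices $Q_0$, arrows $Q_1$, $a$ from $a^-$ to $a^+$) and $\theta\in\mathbb{Z}^{Q_0}$, $\nabla(Q,\theta)=\{x\in\mathbb{R}_{\ge0}^{Q_1}\mid\forall v:\ \theta(v)=\sum_{a^+=v}x(a)-\sum_{a^-=v}x(a)\}$; $S(Q,\theta)=\coprod_{k\ge0}\nabla(Q,k\theta)\cap\mathbb{Z}^{Q_1}$ is a monoid. $x^m=\prod_ax(a)^{m(a)}$ in $\mathbb{C}[x(a)\mid a\in Q_1]$, $\mathcal{A}(Q,\theta)$ is the subalgebra generated by $x^m$, $m\in\nabla(Q,\theta)\cap\mathbb{Z}^{Q_1}$ (it has basis $x^s$, $s\in S(Q,\theta)$), $F=\mathbb{C}[t_m\mid m\in\nabla(Q,\theta)\cap\mathbb{Z}^{Q_1}]$ and $\varphi(t_m)=x^m$; similarly $F'$, $\varphi'$, $\mathcal{A}(Q',\theta)$ for $Q'$ (note $Q'_0=Q_0$). Define $\pi:\mathbb{Z}^{Q_1}\to\mathbb{Z}^{Q'_1}$ by $\pi(m)(\alpha)=m(\alpha_1)+m(\alpha_2)$ and $\pi(m)(\beta)=m(\beta)$ for $\beta\in Q_1\setminus\{\alpha_1,\alpha_2\}=Q'_1\setminus\{\alpha\}$; it maps $S(Q,\theta)$ onto $S(Q',\theta)$, and $\pi:F\to F'$ denotes the algebra map $t_m\mapsto t_{\pi(m)}$. For each monomial $u\in F'$ and each $s\in S(Q,\theta)$ with $x^{\pi(s)}=\varphi'(u)$, a monomial $\psi_s(u)\in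 F$ is fixed such that $\pi(\psi_s(u))=u$ and $\varphi(\psi_s(u))=x^s$ (such a monomial always exists). *)

theory Defs
  imports Complex_Main "HOL-Library.Poly_Mapping"
begin

text \<open>Commutative polynomial rings over the complex numbers in
  variables of type 'x are modelled as poly_mappings from exponent maps to complex (monomials are exponent maps).\<close>

definition is_quiver :: "'v set \<Rightarrow> 'a set \<Rightarrow> ('a \<Rightarrow> 'v) \<Rightarrow> ('a \<Rightarrow> 'v) \<Rightarrow> bool" where
  "is_quiver V A src tgt \<longleftrightarrow> finite V \<and> finite A \<and> src ` A \<subseteq> V \<and> tgt ` A \<subseteq> V"

definition no_oriented_cycles :: "'a set \<Rightarrow> ('a \<Rightarrow> 'v) \<Rightarrow> ('a \<Rightarrow> 'v) \<Rightarrow> bool" where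
  "no_oriented_cycles A src tgt \<longleftrightarrow>
     \<not> (\<exists>as. as \<noteq> [] \<and> set as \<subseteq> A \<and>
            (\<forall>i. Suc i < length as \<longrightarrow> tgt (as ! i) = src (as ! Suc i)) \<and>
            tgt (last as) = src (hd as))"

definition nabla_int :: "'v set \<Rightarrow> 'a set \<Rightarrow> ('a \<Rightarrow> 'v) \<Rightarrow> ('a \<Rightarrow> 'v) \<Rightarrow> ('v \<Rightarrow> int) \<Rightarrow> ('a \<Rightarrow> int) set" where
  "nabla_int V A src tgt \<theta> = {m. (\<forall>a. a \<notin> A \<longrightarrow> m a = 0) \<and> (\<forall>a\<in>A. 0 \<le> m a) \<and>
      (\<forall>v\<in>V. \<theta> v = (\<Sum>a\<in>{a\<in>A. tgt a = v}. m a) - (\<Sum>a\<in>{a\<in>A. src a = v}. m a))}"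

definition S_monoid :: "'v set \<Rightarrow> 'a set \<Rightarrow> ('a \<Rightarrow> 'v) \<Rightarrow> ('a \<Rightarrow> 'v) \<Rightarrow> ('v \<Rightarrow> int) \<Rightarrow> ('a \<Rightarrow> int) set" where
  "S_monoid V A src tgt \<theta> = (\<Union>k::nat. nabla_int V A src tgt (\<lambda>v. int k * \<theta> v))"

text \<open>Polynomial ring C[t_m | m in X] as a subset of the polynomial ring in all variables of type 'x.\<close>
definition polyring :: "'x set \<Rightarrow> (('x \<Rightarrow>\<^sub>0 nat) \<Rightarrow>\<^sub>0 complex) set" where
  "polyring X = {p :: ('x \<Rightarrow>\<^sub>0 nat) \<Rightarrow>\<^sub>0 complex. \<forall>u\<in>Poly_Mapping.keys p. Poly_Mapping.keys u \<subseteq> X}"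

definition monomials_in :: "'x set \<Rightarrow> ('x \<Rightarrow>\<^sub>0 nat) set" where
  "monomials_in X = {u. Poly_Mapping.keys u \<subseteq> X}"

definition mono :: "('x \<Rightarrow>\<^sub>0 nat) \<Rightarrow> (('x \<Rightarrow>\<^sub>0 nat) \<Rightarrow>\<^sub>0 complex)" where
  "mono u = Poly_Mapping.single u 1"

definition tvar :: "'x \<Rightarrow> (('x \<Rightarrow>\<^sub>0 nat) \<Rightarrow>\<^sub>0 complex)" where
  "tvar m = mono (Poly_Mapping.single m 1)"

definition ideal_gen_in :: "'r::comm_ring_1 set \<Rightarrow> 'r set \<Rightarrow> 'r set" where
  "ideal_gen_in R G = {p. \<exists>T c. finite T \<and> T \<subseteq> G \<and> (\<forall>g\<in>T. c g \<in> R) \<and> p = (\<Sum>g\<in>T. c g * g)}"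

definition xmon :: "'a set \<Rightarrow> ('a \<Rightarrow> int) \<Rightarrow> ('a \<Rightarrow>\<^sub>0 nat)" where
  "xmon A e = Abs_poly_mapping (\<lambda>a. if a \<in> A then nat (e a) else 0)"

text \<open>Exponent of phi applied to a monomial prod t_m^{u(m)}: sum of u(m) * m.\<close>
definition expsum :: "(('a \<Rightarrow> int) \<Rightarrow>\<^sub>0 nat) \<Rightarrow> ('a \<Rightarrow> int)" where
  "expsum u = (\<lambda>a. \<Sum>m\<in>Poly_Mapping.keys u. int (Poly_Mapping.lookup u m) * m a)"

text \<open>phi : t_m \<mapsto> x^m, extended as a C-algebra homomorphism.\<close>
definition phi :: "'a set \<Rightarrow> ((('a \<Rightarrow> int) \<Rightarrow>\<^sub>0 nat) \<Rightarrow>\<^sub>0 complex) \<Rightarrow> (('a \<Rightarrow>\<^sub>0 nat) \<Rightarrow>\<^sub>0 complex)" where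
  "phi A p = (\<Sum>u\<in>Poly_Mapping.keys p. Poly_Mapping.single (xmon A (expsum u)) (Poly_Mapping.lookup p u))"

definition ker_phi :: "'a set \<Rightarrow> ('a \<Rightarrow> int) set \<Rightarrow> ((('a \<Rightarrow> int) \<Rightarrow>\<^sub>0 nat) \<Rightarrow>\<^sub>0 complex) set" where
  "ker_phi A L = {p \<in> polyring L. phi A p = 0}"

text \<open>Collapsing alpha1, alpha2 into one arrow: Q' has arrows A - {alpha2}, where alpha1
  plays the role of the new arrow alpha. pi(m)(alpha) = m(alpha1) + m(alpha2).\<close>
definition pimap :: "'a \<Rightarrow> 'a \<Rightarrow> ('a \<Rightarrow> int) \<Rightarrow> ('a \<Rightarrow> int)" where
  "pimap \<alpha>1 \<alpha>2 m = (\<lambda>b. if b = \<alpha>1 then m \<alpha>1 + m \<alpha>2 else if b = \<alpha>2 then 0 else m b)"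

definition pimon :: "'a \<Rightarrow> 'a \<Rightarrow> (('a \<Rightarrow> int) \<Rightarrow>\<^sub>0 nat) \<Rightarrow> (('a \<Rightarrow> int) \<Rightarrow>\<^sub>0 nat)" where
  "pimon \<alpha>1 \<alpha>2 u = (\<Sum>m\<in>Poly_Mapping.keys u. Poly_Mapping.single (pimap \<alpha>1 \<alpha>2 m) (Poly_Mapping.lookup u m))"

definition charfun :: "'a \<Rightarrow> ('a \<Rightarrow> int)" where
  "charfun \<alpha> = (\<lambda>b. if b = \<alpha> then 1 else 0)"

end

theory Submission
  imports Defs
begin


lemma update_single_add:
  assumes "k \<notin> Poly_Mapping.keys f"
  shows "Poly_Mapping.update k b f = Poly_Mapping.single k b + f"
  using assms
  by (intro poly_mapping_eqI) (auto simp: Poly_Mapping.lookup_update lookup_add lookup_single in_keys_iff when_def)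

lemma nat_pm_induct[case_names zero add]:
  fixes a :: "'k \<Rightarrow>\<^sub>0 nat"
  assumes z: "P 0" and s: "\<And>m a. P a \<Longrightarrow> P (Poly_Mapping.single m 1 + a)"
  shows "P a"
proof (induction a rule: Poly_Mapping.update_induct)
  case const
  then show ?case using z .
next
  case (update f k b)
  have "P (Poly_Mapping.single k n + f)" for n
  proof (induction n)
    case 0 then show ?case using update by simp
  next
    case (Suc n)
    have "Poly_Mapping.single k (Suc n) + f = Poly_Mapping.single k 1 + (Poly_Mapping.single k n + f)"
      by (simp add: single_add[symmetric] add.assoc[symmetric])
    then show ?case using s[OF Suc] by simp
  qed
  then show ?case using update_single_add[OF update(1)] by simp
qed

lemma keys_add_nat: "Poly_Mapping.keys (a + b :: 'k \<Rightarrow>\<^sub>0 nat) = Poly_Mapping.keys a \<union> Poly_Mapping.keys b"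
  by (auto simp: in_keys_iff lookup_add)

definition degm :: "('k \<Rightarrow>\<^sub>0 nat) \<Rightarrow> nat" where
  "degm a = sum (Poly_Mapping.lookup a) (Poly_Mapping.keys a)"

lemma degm_add: "degm (a + b) = degm a + degm b"
  unfolding degm_def
  by (rule setsum_keys_plus_distrib[where f="\<lambda>k n. n", simplified]) 

lemma degm_single[simp]: "degm (Poly_Mapping.single m n) = n"
  by (simp add: degm_def)

lemma degm_zero[simp]: "degm 0 = 0"
  by (simp add: degm_def)

lemma degm_eq_0: "degm a = 0 \<longleftrightarrow> a = 0"
  by (auto simp: degm_def in_keys_iff poly_mapping_eqI)

lemma expsum_add: "expsum (a + b) = (\<lambda>x. expsum a x + expsum b x)"
proof
  fix x
  have "(\<Sum>m\<in>Poly_Mapping.keys (a + b). int (Poly_Mapping.lookup (a + b) m) * m x)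
      = (\<Sum>m\<in>Poly_Mapping.keys a. int (Poly_Mapping.lookup a m) * m x) + (\<Sum>m\<in>Poly_Mapping.keys b. int (Poly_Mapping.lookup b m) * m x)"
    by (rule setsum_keys_plus_distrib[where f="\<lambda>m n. int n * m x"]) (auto simp: algebra_simps)
  then show "expsum (a + b) x = expsum a x + expsum b x"
    by (simp add: expsum_def)
qed

lemma expsum_single[simp]: "expsum (Poly_Mapping.single m n) = (\<lambda>x. int n * m x)"
  by (simp add: expsum_def fun_eq_iff)

lemma expsum_zero[simp]: "expsum 0 = (\<lambda>x. 0)"
  by (simp add: expsum_def fun_eq_iff)

lemma pimon_add: "pimon a1 a2 (a + b) = pimon a1 a2 a + pimon a1 a2 b"
  unfolding pimon_def
  by (rule setsum_keys_plus_distrib) (auto simp: single_add)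

lemma pimon_single[simp]: "pimon a1 a2 (Poly_Mapping.single m n) = Poly_Mapping.single (pimap a1 a2 m) n"
  by (simp add: pimon_def)

lemma pimon_zero[simp]: "pimon a1 a2 0 = 0"
  by (simp add: pimon_def)

lemma phi_add: "phi A (p + q) = phi A p + phi A q"
  unfolding phi_def
  by (rule setsum_keys_plus_distrib) (auto simp: single_add)

lemma phi_single[simp]: "phi A (Poly_Mapping.single u c) = Poly_Mapping.single (xmon A (expsum u)) c"
  by (simp add: phi_def)

lemma phi_zero[simp]: "phi A 0 = 0"
  by (simp add: phi_def)

lemma phi_uminus: "phi A (- p) = - phi A p"
proof -
  have "phi A (p + - p) = 0" by simp
  then show ?thesis unfolding phi_add by (simp add: eq_neg_iff_add_eq_0 add.commute)
qed

lemma phi_diff: "phi A (p - q) = phi A p - phi A q"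
  using phi_add[of A p "-q"] phi_uminus[of A q] by simp

lemma phi_mono: "phi A (mono u) = mono (xmon A (expsum u))"
  by (simp add: mono_def)



definition ringlike :: "'r::comm_ring_1 set \<Rightarrow> bool" where
  "ringlike R \<longleftrightarrow> 0 \<in> R \<and> 1 \<in> R \<and> (\<forall>x\<in>R. \<forall>y\<in>R. x + y \<in> R \<and> x * y \<in> R) \<and> (\<forall>x\<in>R. - x \<in> R)"

lemma ideal_zero: "0 \<in> ideal_gen_in R G"
  unfolding ideal_gen_in_def by (rule CollectI, rule exI[of _ "{}"]) auto

lemma ideal_gen: "ringlike R \<Longrightarrow> g \<in> G \<Longrightarrow> g \<in> ideal_gen_in R G"
  unfolding ideal_gen_in_def ringlike_def
  by (rule CollectI, rule exI[of _ "{g}"], rule exI[of _ "\<lambda>_. 1"]) auto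

lemma ideal_add:
  assumes R: "ringlike R" and p: "p \<in> ideal_gen_in R G" and q: "q \<in> ideal_gen_in R G"
  shows "p + q \<in> ideal_gen_in R G"
proof -
  obtain T1 c1 where 1: "finite T1" "T1 \<subseteq> G" "\<forall>g\<in>T1. c1 g \<in> R" "p = (\<Sum>g\<in>T1. c1 g * g)"
    using p unfolding ideal_gen_in_def by blast
  obtain T2 c2 where 2: "finite T2" "T2 \<subseteq> G" "\<forall>g\<in>T2. c2 g \<in> R" "q = (\<Sum>g\<in>T2. c2 g * g)"
    using q unfolding ideal_gen_in_def by blast
  define c where "c g = (if g \<in> T1 then c1 g else 0) + (if g \<in> T2 then c2 g else 0)" for g
  have cR: "\<forall>g\<in>T1 \<union> T2. c g \<in> R" using 1 2 R unfolding c_def ringlike_def by auto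
  have e1: "(\<Sum>g\<in>T1 \<union> T2. (if g \<in> T1 then c1 g else 0) * g) = p"
  proof -
    have "(\<Sum>g\<in>T1 \<union> T2. (if g \<in> T1 then c1 g else 0) * g) = (\<Sum>g\<in>T1 \<union> T2. if g \<in> T1 then c1 g * g else 0)"
      by (rule sum.cong) auto
    also have "\<dots> = (\<Sum>g\<in>(T1 \<union> T2) \<inter> T1. c1 g * g)"
      by (rule sum.inter_restrict[symmetric]) (use 1 2 in auto)
    also have "(T1 \<union> T2) \<inter> T1 = T1" by auto
    finally show ?thesis using 1 by simp
  qed
  have e2: "(\<Sum>g\<in>T1 \<union> T2. (if g \<in> T2 then c2 g else 0) * g) = q"
  proof -
    have "(\<Sum>g\<in>T1 \<union> T2. (if g \<in> T2 then c2 g else 0) * g) = (\<Sum>g\<in>T1 \<union> T2. if g \<in> T2 then c2 g * g else 0)"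
      by (rule sum.cong) auto
    also have "\<dots> = (\<Sum>g\<in>(T1 \<union> T2) \<inter> T2. c2 g * g)"
      by (rule sum.inter_restrict[symmetric]) (use 1 2 in auto)
    also have "(T1 \<union> T2) \<inter> T2 = T2" by auto
    finally show ?thesis using 2 by simp
  qed
  have "p + q = (\<Sum>g\<in>T1 \<union> T2. c g * g)"
    unfolding c_def distrib_right sum.distrib e1 e2 ..
  then show ?thesis unfolding ideal_gen_in_def using 1 2 cR
    by (intro CollectI exI[of _ "T1 \<union> T2"] exI[of _ c]) auto
qed

lemma ideal_mult:
  assumes R: "ringlike R" and r: "r \<in> R" and p: "p \<in> ideal_gen_in R G"
  shows "r * p \<in> ideal_gen_in R G"
proof -
  obtain T1 c1 where 1: "finite T1" "T1 \<subseteq> G" "\<forall>g\<in>T1. c1 g \<in> R" "p = (\<Sum>g\<in>T1. c1 g * g)"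
    using p unfolding ideal_gen_in_def by blast
  have e: "r * p = (\<Sum>g\<in>T1. (r * c1 g) * g)" unfolding 1(4) by (simp add: sum_distrib_left mult.assoc)
  have m: "\<forall>g\<in>T1. r * c1 g \<in> R" using 1(3) R r unfolding ringlike_def by blast
  show ?thesis unfolding ideal_gen_in_def
    by (intro CollectI exI[of _ T1] exI[of _ "\<lambda>g. r * c1 g"] conjI 1(1) 1(2) m e)
qed

lemma ideal_uminus:
  assumes R: "ringlike R" and p: "p \<in> ideal_gen_in R G"
  shows "- p \<in> ideal_gen_in R G"
proof -
  have "-1 \<in> R" using R unfolding ringlike_def by blast
  from ideal_mult[OF R this p] show ?thesis by simp
qed

lemma ideal_diff:
  assumes R: "ringlike R" and p: "p \<in> ideal_gen_in R G" and q: "q \<in> ideal_gen_in R G"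
  shows "p - q \<in> ideal_gen_in R G"
  using ideal_add[OF R p ideal_uminus[OF R q]] by simp

lemma ideal_sum:
  assumes R: "ringlike R" and "finite T" and "\<And>x. x \<in> T \<Longrightarrow> f x \<in> ideal_gen_in R G"
  shows "(\<Sum>x\<in>T. f x) \<in> ideal_gen_in R G"
  using assms(2,3)
proof (induction T rule: finite_induct)
  case empty then show ?case by (simp add: ideal_zero)
next
  case (insert x F)
  then have "f x \<in> ideal_gen_in R G" "(\<Sum>x\<in>F. f x) \<in> ideal_gen_in R G" by auto
  then show ?case using insert(1,2) ideal_add[OF R] by simp
qed

lemma ringlike_sum:
  assumes R: "ringlike R" and "finite T" and "\<And>x. x \<in> T \<Longrightarrow> f x \<in> R"
  shows "(\<Sum>x\<in>T. f x) \<in> R"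
  using assms(2,3)
proof (induction T rule: finite_induct)
  case empty then show ?case using R unfolding ringlike_def by simp
next
  case (insert x F)
  then have "f x \<in> R" "(\<Sum>x\<in>F. f x) \<in> R" by auto
  then show ?case using insert(1,2) R unfolding ringlike_def by simp
qed

lemma ideal_subset:
  assumes R: "ringlike R" and "G \<subseteq> R"
  shows "ideal_gen_in R G \<subseteq> R"
proof
  fix p assume "p \<in> ideal_gen_in R G"
  then obtain T1 c1 where 1: "finite T1" "T1 \<subseteq> G" "\<forall>g\<in>T1. c1 g \<in> R" "p = (\<Sum>g\<in>T1. c1 g * g)"
    unfolding ideal_gen_in_def by blast
  have "c1 g * g \<in> R" if "g \<in> T1" for g
  proof -
    have "c1 g \<in> R" using 1(3) that by blast
    moreover have "g \<in> R" using 1(2) assms(2) that by blast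
    ultimately have "c1 g \<in> R \<and> g \<in> R" by blast
    then show ?thesis using R unfolding ringlike_def by blast
  qed
  then show "p \<in> R" unfolding 1(4) by (rule ringlike_sum[OF R 1(1), of "\<lambda>g. c1 g * g"])
qed

lemma ringlike_polyring: "ringlike (polyring X)"
proof -
  have add: "x + y \<in> polyring X" if "x \<in> polyring X" "y \<in> polyring X" for x y
  proof -
    have "Poly_Mapping.keys u \<subseteq> X" if "u \<in> Poly_Mapping.keys (x + y)" for u
    proof -
      from that keys_add[of x y] have "u \<in> Poly_Mapping.keys x \<or> u \<in> Poly_Mapping.keys y" by blast
      then show ?thesis using \<open>x \<in> polyring X\<close> \<open>y \<in> polyring X\<close> unfolding polyring_def by blast
    qed
    then show ?thesis unfolding polyring_def by blast
  qed
  have mul: "x * y \<in> polyring X" if "x \<in> polyring X" "y \<in> polyring X" for x y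
  proof -
    have "Poly_Mapping.keys u \<subseteq> X" if "u \<in> Poly_Mapping.keys (x * y)" for u
    proof -
      from that keys_mult[of x y] obtain a b where "u = a + b" "a \<in> Poly_Mapping.keys x" "b \<in> Poly_Mapping.keys y"
        by blast
      moreover have "Poly_Mapping.keys a \<subseteq> X" "Poly_Mapping.keys b \<subseteq> X"
        using calculation \<open>x \<in> polyring X\<close> \<open>y \<in> polyring X\<close> unfolding polyring_def by blast+
      ultimately show ?thesis by (simp add: keys_add_nat)
    qed
    then show ?thesis unfolding polyring_def by blast
  qed
  have neg: "- x \<in> polyring X" if "x \<in> polyring X" for x
  proof -
    have "Poly_Mapping.keys (- x) = Poly_Mapping.keys x" by (simp add: in_keys_iff set_eq_iff)
    then show ?thesis using that unfolding polyring_def by simp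
  qed
  have z: "0 \<in> polyring X" unfolding polyring_def by simp
  have o: "1 \<in> polyring X" unfolding polyring_def by simp
  show ?thesis unfolding ringlike_def using add mul neg z o by blast
qed

lemma mono_in_polyring: "mono u \<in> polyring X \<longleftrightarrow> Poly_Mapping.keys u \<subseteq> X"
  by (simp add: mono_def polyring_def)

lemma single_in_polyring: "Poly_Mapping.keys u \<subseteq> X \<Longrightarrow> Poly_Mapping.single u c \<in> polyring X"
  by (simp add: polyring_def)

lemma mono_add: "mono (a + b) = mono a * mono b"
  by (simp add: mono_def mult_single)

lemma lookup_xmon: "finite A \<Longrightarrow> Poly_Mapping.lookup (xmon A e) = (\<lambda>a. if a \<in> A then nat (e a) else 0)"
  unfolding xmon_def
  by (rule lookup_Abs_poly_mapping) (auto intro: finite_subset)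

lemma xmon_eq_iff: "finite A \<Longrightarrow> xmon A e1 = xmon A e2 \<longleftrightarrow> (\<forall>x\<in>A. nat (e1 x) = nat (e2 x))"
  by (auto simp: poly_mapping_eq_iff lookup_xmon fun_eq_iff) 

lemma xmon_add:
  assumes "finite A" "\<forall>x\<in>A. 0 \<le> e1 x" "\<forall>x\<in>A. 0 \<le> e2 x"
  shows "xmon A (\<lambda>x. e1 x + e2 x) = xmon A e1 + xmon A e2"
  using assms by (intro poly_mapping_eqI) (auto simp: lookup_xmon lookup_add nat_add_distrib)

lemma mono_eq_iff: "mono a = mono b \<longleftrightarrow> a = b"
  by (auto simp: mono_def poly_mapping_eq_iff fun_eq_iff lookup_single when_def split: if_splits)

lemma phi_mult_mono:
  assumes "\<And>u. u \<in> Poly_Mapping.keys r \<Longrightarrow> xmon A (expsum (u + a)) = xmon A (expsum u) + xmon A (expsum a)"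
  shows "phi A (r * mono a) = phi A r * mono (xmon A (expsum a))"
  using assms
proof (induction r rule: Poly_Mapping.update_induct)
  case const
  then show ?case by simp
next
  case (update f k b)
  have e: "Poly_Mapping.update k b f = Poly_Mapping.single k b + f" by (rule update_single_add[OF update(1)])
  have kf: "Poly_Mapping.keys (Poly_Mapping.update k b f) = insert k (Poly_Mapping.keys f)"
    using update(2) by (simp add: Poly_Mapping.keys_update)
  have IH: "phi A (f * mono a) = phi A f * mono (xmon A (expsum a))"
    using update(3) update(4) kf by auto
  have xk: "xmon A (expsum (k + a)) = xmon A (expsum k) + xmon A (expsum a)"
    using update(4) kf by auto
  show ?case unfolding e distrib_right phi_add IH
    by (simp add: mono_def mult_single xk)
qed



lemma nabla_zero: "m \<in> nabla_int V A s t th \<Longrightarrow> x \<notin> A \<Longrightarrow> m x = 0"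
  by (simp add: nabla_int_def)

lemma nabla_nonneg: "m \<in> nabla_int V A s t th \<Longrightarrow> 0 \<le> m x"
  by (cases "x \<in> A") (auto simp: nabla_int_def)

lemma nabla_add:
  assumes "m \<in> nabla_int V A s t th1" "n \<in> nabla_int V A s t th2"
  shows "(\<lambda>a. m a + n a) \<in> nabla_int V A s t (\<lambda>v. th1 v + th2 v)"
  using assms by (auto simp: nabla_int_def sum.distrib)

lemma nabla_zero_mem: "(\<lambda>a. 0) \<in> nabla_int V A s t (\<lambda>v. 0)"
  by (simp add: nabla_int_def)

lemma expsum_nabla:
  assumes "Poly_Mapping.keys a \<subseteq> nabla_int V A s t th"
  shows "expsum a \<in> nabla_int V A s t (\<lambda>v. int (degm a) * th v)"
  using assms
proof (induction a rule: nat_pm_induct)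
  case zero
  then show ?case using nabla_zero_mem by simp
next
  case (add m a)
  have k: "Poly_Mapping.keys (Poly_Mapping.single m 1 + a) = insert m (Poly_Mapping.keys a)"
    by (simp add: keys_add_nat)
  have "expsum a \<in> nabla_int V A s t (\<lambda>v. int (degm a) * th v)" "m \<in> nabla_int V A s t th"
    using add k by auto
  from nabla_add[OF this(2) this(1)]
  have "(\<lambda>x. m x + expsum a x) \<in> nabla_int V A s t (\<lambda>v. th v + int (degm a) * th v)" .
  moreover have "(\<lambda>v. th v + int (degm a) * th v) = (\<lambda>v. int (degm (Poly_Mapping.single m 1 + a)) * th v)"
    by (simp add: degm_add algebra_simps)
  moreover have "expsum (Poly_Mapping.single m 1 + a) = (\<lambda>x. m x + expsum a x)"
    by (simp add: expsum_add)
  ultimately show ?case by simp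
qed

lemma expsum_S:
  assumes "Poly_Mapping.keys a \<subseteq> nabla_int V A s t th"
  shows "expsum a \<in> S_monoid V A s t th"
  using expsum_nabla[OF assms] unfolding S_monoid_def by blast

lemma expsum_nonneg:
  assumes "Poly_Mapping.keys a \<subseteq> nabla_int V A s t th"
  shows "0 \<le> expsum a x"
  unfolding expsum_def
proof (intro sum_nonneg)
  fix m assume "m \<in> Poly_Mapping.keys a"
  then have "0 \<le> m x" by (rule nabla_nonneg[OF subsetD[OF assms]])
  then show "0 \<le> int (Poly_Mapping.lookup a m) * m x" by simp
qed

lemma expsum_off:
  assumes "Poly_Mapping.keys a \<subseteq> nabla_int V A s t th" "x \<notin> A"
  shows "expsum a x = 0"
  unfolding expsum_def using assms nabla_zero
  by (intro sum.neutral) fastforce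

lemma xmon_inj:
  assumes "finite A" "\<And>x. 0 \<le> e1 x" "\<And>x. 0 \<le> e2 x" "\<And>x. x \<notin> A \<Longrightarrow> e1 x = 0" "\<And>x. x \<notin> A \<Longrightarrow> e2 x = 0"
    and "xmon A e1 = xmon A e2"
  shows "e1 = e2"
proof
  fix x
  show "e1 x = e2 x"
  proof (cases "x \<in> A")
    case True
    then have "nat (e1 x) = nat (e2 x)" using assms(6) xmon_eq_iff[OF assms(1)] by auto
    then show ?thesis using assms(2,3)[of x] by simp
  qed (use assms in auto)
qed

lemma pimap_add: "pimap a1 a2 (\<lambda>x. f x + g x) = (\<lambda>b. pimap a1 a2 f b + pimap a1 a2 g b)"
  by (auto simp: pimap_def fun_eq_iff)

lemma pimap_zero: "pimap a1 a2 (\<lambda>x. 0) = (\<lambda>x. 0)"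
  by (auto simp: pimap_def fun_eq_iff)

lemma expsum_pimon: "expsum (pimon a1 a2 a) = pimap a1 a2 (expsum a)"
proof (induction a rule: nat_pm_induct)
  case zero
  then show ?case by (simp add: pimap_zero)
next
  case (add m a)
  show ?case by (simp add: pimon_add expsum_add add pimap_add)
qed

lemma sum_charfun: "finite X \<Longrightarrow> (\<Sum>z\<in>X. charfun a z) = (if a \<in> X then 1 else 0)"
  by (simp add: charfun_def)

lemma sum_pimap:
  assumes "finite X" "a1 \<noteq> a2" "a1 \<in> X \<longleftrightarrow> a2 \<in> X"
  shows "(\<Sum>z\<in>X - {a2}. pimap a1 a2 m z) = (\<Sum>z\<in>X. m z)"
proof (cases "a2 \<in> X")
  case True
  then have a1: "a1 \<in> X - {a2}" using assms by auto
  have fin: "finite (X - {a2})" using assms by auto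
  have "(\<Sum>z\<in>X. m z) = m a2 + (\<Sum>z\<in>X - {a2}. m z)" using sum.remove[OF assms(1) True] .
  also have "(\<Sum>z\<in>X - {a2}. m z) = m a1 + (\<Sum>z\<in>X - {a2} - {a1}. m z)" using sum.remove[OF fin a1] .
  also have "(\<Sum>z\<in>X - {a2} - {a1}. m z) = (\<Sum>z\<in>X - {a2} - {a1}. pimap a1 a2 m z)"
    by (rule sum.cong) (auto simp: pimap_def)
  also have "(\<Sum>z\<in>X - {a2}. pimap a1 a2 m z) = pimap a1 a2 m a1 + (\<Sum>z\<in>X - {a2} - {a1}. pimap a1 a2 m z)"
    using sum.remove[OF fin a1] .
  moreover have "pimap a1 a2 m a1 = m a1 + m a2" by (simp add: pimap_def)
  ultimately show ?thesis by simp
next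
  case False
  then have e: "X - {a2} = X" and n1: "a1 \<notin> X" using assms by auto
  have "pimap a1 a2 m z = m z" if "z \<in> X" for z
    using that False n1 unfolding pimap_def by (metis)
  then show ?thesis unfolding e by (rule sum.cong[OF refl])
qed

locale Q9 =
  fixes V :: "'v set" and A :: "'a set" and src tgt :: "'a \<Rightarrow> 'v"
    and \<theta> :: "'v \<Rightarrow> int" and \<alpha>1 \<alpha>2 :: 'a
  assumes quiver: "is_quiver V A src tgt"
    and arrows: "\<alpha>1 \<in> A" "\<alpha>2 \<in> A" "\<alpha>1 \<noteq> \<alpha>2"
    and same_ends: "src \<alpha>1 = src \<alpha>2" "tgt \<alpha>1 = tgt \<alpha>2"
begin

abbreviation L :: "('a \<Rightarrow> int) set" where "L \<equiv> nabla_int V A src tgt \<theta>"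
abbreviation L' :: "('a \<Rightarrow> int) set" where "L' \<equiv> nabla_int V (A - {\<alpha>2}) src tgt \<theta>"
abbreviation SS :: "('a \<Rightarrow> int) set" where "SS \<equiv> S_monoid V A src tgt \<theta>"

definition shf :: "('a \<Rightarrow> int) \<Rightarrow> int \<Rightarrow> ('a \<Rightarrow> int)" where
  "shf m j = (\<lambda>b. m b + j * (charfun \<alpha>2 b - charfun \<alpha>1 b))"

lemma finA: "finite A" using quiver by (simp add: is_quiver_def)

lemma pimap_L: assumes "m \<in> L" shows "pimap \<alpha>1 \<alpha>2 m \<in> L'"
proof -
  have z: "pimap \<alpha>1 \<alpha>2 m a = 0" if "a \<notin> A - {\<alpha>2}" for a
  proof (cases "a = \<alpha>2")
    case True then show ?thesis using arrows(3) by (simp add: pimap_def)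
  next
    case False
    then have "a \<notin> A" "a \<noteq> \<alpha>1" using that arrows(1) by auto
    then show ?thesis using nabla_zero[OF assms, of a] False by (simp add: pimap_def)
  qed
  have nn: "0 \<le> pimap \<alpha>1 \<alpha>2 m a" for a
    using nabla_nonneg[OF assms, of a] nabla_nonneg[OF assms, of \<alpha>1] nabla_nonneg[OF assms, of \<alpha>2]
    by (simp add: pimap_def)
  have fl: "\<theta> v = (\<Sum>a\<in>{a\<in>A - {\<alpha>2}. tgt a = v}. pimap \<alpha>1 \<alpha>2 m a) - (\<Sum>a\<in>{a\<in>A - {\<alpha>2}. src a = v}. pimap \<alpha>1 \<alpha>2 m a)"
    if "v \<in> V" for v
  proof -
    have e1: "{a\<in>A - {\<alpha>2}. tgt a = v} = {a\<in>A. tgt a = v} - {\<alpha>2}" by blast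
    have e2: "{a\<in>A - {\<alpha>2}. src a = v} = {a\<in>A. src a = v} - {\<alpha>2}" by blast
    have f1: "finite {a\<in>A. tgt a = v}" "finite {a\<in>A. src a = v}" using finA by auto
    have i1: "\<alpha>1 \<in> {a\<in>A. tgt a = v} \<longleftrightarrow> \<alpha>2 \<in> {a\<in>A. tgt a = v}"
      using arrows same_ends by simp
    have i2: "\<alpha>1 \<in> {a\<in>A. src a = v} \<longleftrightarrow> \<alpha>2 \<in> {a\<in>A. src a = v}"
      using arrows same_ends by simp
    have s1: "(\<Sum>a\<in>{a\<in>A. tgt a = v} - {\<alpha>2}. pimap \<alpha>1 \<alpha>2 m a) = (\<Sum>a\<in>{a\<in>A. tgt a = v}. m a)"
      by (rule sum_pimap[OF f1(1) arrows(3) i1])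
    have s2: "(\<Sum>a\<in>{a\<in>A. src a = v} - {\<alpha>2}. pimap \<alpha>1 \<alpha>2 m a) = (\<Sum>a\<in>{a\<in>A. src a = v}. m a)"
      by (rule sum_pimap[OF f1(2) arrows(3) i2])
    have "\<theta> v = (\<Sum>a\<in>{a\<in>A. tgt a = v}. m a) - (\<Sum>a\<in>{a\<in>A. src a = v}. m a)"
      using assms that unfolding nabla_int_def by blast
    then show ?thesis unfolding e1 e2 s1 s2 .
  qed
  show ?thesis unfolding nabla_int_def mem_Collect_eq by (intro conjI allI ballI impI z nn fl)
qed

lemma pimon_keys:
  assumes "Poly_Mapping.keys a \<subseteq> L"
  shows "Poly_Mapping.keys (pimon \<alpha>1 \<alpha>2 a) \<subseteq> L'"
  using assms
proof (induction a rule: nat_pm_induct)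
  case zero then show ?case by simp
next
  case (add m a)
  then show ?case by (auto simp: pimon_add keys_add_nat pimap_L)
qed

lemma shf_L:
  assumes "m \<in> L" "0 \<le> m \<alpha>1 - j" "0 \<le> m \<alpha>2 + j"
  shows "shf m j \<in> L"
proof -
  have z: "shf m j a = 0" if "a \<notin> A" for a
    using that arrows nabla_zero[OF assms(1)] by (auto simp: shf_def charfun_def)
  have nn: "0 \<le> shf m j a" for a
    using nabla_nonneg[OF assms(1), of a] assms(2,3) arrows by (auto simp: shf_def charfun_def)
  have sx: "(\<Sum>a\<in>X. shf m j a) = (\<Sum>a\<in>X. m a)" if "X \<subseteq> A" "\<alpha>1 \<in> X \<longleftrightarrow> \<alpha>2 \<in> X" for X
  proof -
    have fX: "finite X" using that finA finite_subset by blast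
    have "(\<Sum>a\<in>X. shf m j a) = (\<Sum>a\<in>X. m a) + j * ((\<Sum>a\<in>X. charfun \<alpha>2 a) - (\<Sum>a\<in>X. charfun \<alpha>1 a))"
      by (simp add: shf_def sum.distrib sum_distrib_left sum_subtractf algebra_simps)
    then show ?thesis using that(2) by (simp add: sum_charfun[OF fX])
  qed
  have fl: "\<theta> v = (\<Sum>a\<in>{a\<in>A. tgt a = v}. shf m j a) - (\<Sum>a\<in>{a\<in>A. src a = v}. shf m j a)"
    if "v \<in> V" for v
  proof -
    have "(\<Sum>a\<in>{a\<in>A. tgt a = v}. shf m j a) = (\<Sum>a\<in>{a\<in>A. tgt a = v}. m a)"
      by (rule sx) (use arrows same_ends in auto)
    moreover have "(\<Sum>a\<in>{a\<in>A. src a = v}. shf m j a) = (\<Sum>a\<in>{a\<in>A. src a = v}. m a)"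
      by (rule sx) (use arrows same_ends in auto)
    ultimately show ?thesis using assms(1) that by (simp add: nabla_int_def)
  qed
  show ?thesis unfolding nabla_int_def mem_Collect_eq by (intro conjI allI ballI impI z nn fl)
qed

lemma pimap_shf[simp]: "pimap \<alpha>1 \<alpha>2 (shf m j) = pimap \<alpha>1 \<alpha>2 m"
  using arrows by (auto simp: pimap_def shf_def charfun_def fun_eq_iff)

lemma shf_shf[simp]: "shf (shf m j) k = shf m (j + k)"
  by (auto simp: shf_def fun_eq_iff algebra_simps)

lemma shf_0[simp]: "shf m 0 = m"
  by (auto simp: shf_def)

lemma shf_a1[simp]: "shf m j \<alpha>1 = m \<alpha>1 - j" and shf_a2[simp]: "shf m j \<alpha>2 = m \<alpha>2 + j"
  using arrows by (auto simp: shf_def charfun_def)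

lemma shf_1: "shf m 1 = (\<lambda>b. m b + charfun \<alpha>2 b - charfun \<alpha>1 b)"
  by (auto simp: shf_def fun_eq_iff)

lemma shf_m1: "shf n (-1) = (\<lambda>b. n b + charfun \<alpha>1 b - charfun \<alpha>2 b)"
  by (auto simp: shf_def fun_eq_iff)

lemma pimap_eq_shf:
  assumes "pimap \<alpha>1 \<alpha>2 m = pimap \<alpha>1 \<alpha>2 m'" "m \<alpha>2 = 0 \<longrightarrow> True" "m \<in> L" "m' \<in> L"
  shows "m' = shf m (m \<alpha>1 - m' \<alpha>1)"
proof
  fix b
  show "m' b = shf m (m \<alpha>1 - m' \<alpha>1) b"
  proof (cases "b = \<alpha>1 \<or> b = \<alpha>2")
    case True
    have "m \<alpha>1 + m \<alpha>2 = m' \<alpha>1 + m' \<alpha>2" using fun_cong[OF assms(1), of \<alpha>1] by (simp add: pimap_def)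
    then show ?thesis using True arrows by (auto simp: shf_def charfun_def)
  next
    case False
    then show ?thesis using fun_cong[OF assms(1), of b] by (auto simp: pimap_def shf_def charfun_def)
  qed
qed

lemma expsum_L_eq:
  assumes "Poly_Mapping.keys a \<subseteq> L" "Poly_Mapping.keys b \<subseteq> L"
  shows "phi A (mono a) = phi A (mono b) \<longleftrightarrow> expsum a = expsum b"
proof
  assume "phi A (mono a) = phi A (mono b)"
  then have x: "xmon A (expsum a) = xmon A (expsum b)" by (simp add: phi_mono mono_eq_iff)
  show "expsum a = expsum b"
    by (rule xmon_inj[OF finA _ _ _ _ x]) (use expsum_nonneg[OF assms(1)] expsum_nonneg[OF assms(2)]
          expsum_off[OF assms(1)] expsum_off[OF assms(2)] in auto)
next
  assume "expsum a = expsum b"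
  then show "phi A (mono a) = phi A (mono b)" by (simp add: phi_mono)
qed

end



lemma pm_split:
  fixes a :: "'k \<Rightarrow>\<^sub>0 nat"
  assumes "m \<in> Poly_Mapping.keys a"
  shows "a = Poly_Mapping.single m 1 + (a - Poly_Mapping.single m 1)"
  using assms by (intro poly_mapping_eqI) (auto simp: lookup_add lookup_minus lookup_single in_keys_iff when_def)

lemma keys_diff_sub:
  fixes a :: "'k \<Rightarrow>\<^sub>0 nat"
  shows "Poly_Mapping.keys (a - b) \<subseteq> Poly_Mapping.keys a"
  by (auto simp: in_keys_iff lookup_minus)

lemma expsum_pos:
  assumes "0 < expsum a x"
  shows "\<exists>n\<in>Poly_Mapping.keys a. 0 < n x"
proof (rule ccontr)
  assume "\<not> ?thesis"
  then have "\<forall>n\<in>Poly_Mapping.keys a. n x \<le> 0" by auto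
  then have "expsum a x \<le> 0" unfolding expsum_def
    by (intro sum_nonpos) (simp add: mult_nonneg_nonpos)
  then show False using assms by simp
qed

lemma degm_pimon: "degm (pimon a1 a2 a) = degm a"
  by (induction a rule: nat_pm_induct) (auto simp: pimon_add degm_add)

lemma keys_pimon: "Poly_Mapping.keys (pimon a1 a2 a) \<subseteq> pimap a1 a2 ` Poly_Mapping.keys a"
  by (induction a rule: nat_pm_induct) (auto simp: pimon_add keys_add_nat)

lemma pimap_in_keys: "m \<in> Poly_Mapping.keys a \<Longrightarrow> pimap a1 a2 m \<in> Poly_Mapping.keys (pimon a1 a2 a)"
  by (subst pm_split[of m a]) (auto simp: pimon_add keys_add_nat)

lemma expsum_cancel:
  assumes "expsum (Poly_Mapping.single c 1 + x) = expsum (Poly_Mapping.single c 1 + y)"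
  shows "expsum x = expsum y"
proof
  fix z
  from fun_cong[OF assms, of z] show "expsum x z = expsum y z" by (simp add: expsum_add)
qed

locale Q9b = Q9 V A src tgt \<theta> \<alpha>1 \<alpha>2
  for V :: "'v set" and A :: "'a set" and src tgt :: "'a \<Rightarrow> 'v"
    and \<theta> :: "'v \<Rightarrow> int" and \<alpha>1 \<alpha>2 :: 'a +
  fixes \<psi> :: "('a \<Rightarrow> int) \<Rightarrow> (('a \<Rightarrow> int) \<Rightarrow>\<^sub>0 nat) \<Rightarrow> (('a \<Rightarrow> int) \<Rightarrow>\<^sub>0 nat)"
    and u v :: "'l \<Rightarrow> (('a \<Rightarrow> int) \<Rightarrow>\<^sub>0 nat)"
  assumes psi: "\<And>s w. s \<in> SS \<Longrightarrow> w \<in> monomials_in L' \<Longrightarrow>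
                 phi (A - {\<alpha>2}) (mono w) = mono (xmon (A - {\<alpha>2}) (pimap \<alpha>1 \<alpha>2 s)) \<Longrightarrow>
                 \<psi> s w \<in> monomials_in L \<and> pimon \<alpha>1 \<alpha>2 (\<psi> s w) = w \<and>
                 phi A (mono (\<psi> s w)) = mono (xmon A s)"
    and uv_mon: "\<And>i. u i \<in> monomials_in L'" "\<And>i. v i \<in> monomials_in L'"
    and gens': "ideal_gen_in (polyring L') (range (\<lambda>i. mono (u i) - mono (v i)))
                  = ker_phi (A - {\<alpha>2}) L'"
begin

definition GG where "GG = ({mono (\<psi> s (u i)) - mono (\<psi> s (v i)) | i s.
               s \<in> SS \<and> mono (xmon (A - {\<alpha>2}) (pimap \<alpha>1 \<alpha>2 s)) = phi (A - {\<alpha>2}) (mono (u i))}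
            \<union> {tvar m * tvar n - tvar (\<lambda>b. m b + charfun \<alpha>2 b - charfun \<alpha>1 b) * tvar (\<lambda>b. n b + charfun \<alpha>1 b - charfun \<alpha>2 b) | m n.
               m \<in> L \<and> n \<in> L \<and> m \<alpha>1 > 0 \<and> n \<alpha>2 > 0})"

abbreviation I where "I \<equiv> ideal_gen_in (polyring L) GG"

definition rel where "rel a b \<longleftrightarrow> mono a - mono b \<in> I"

lemma RL: "ringlike (polyring L)" by (rule ringlike_polyring)

lemma rel_refl: "rel a a"
  unfolding rel_def using ideal_zero by simp

lemma rel_sym: "rel a b \<Longrightarrow> rel b a"
  unfolding rel_def using ideal_uminus[OF RL] by fastforce

lemma rel_trans: "rel a b \<Longrightarrow> rel b c \<Longrightarrow> rel a c"
  unfolding rel_def using ideal_add[OF RL] by fastforce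

lemma rel_cong:
  assumes "rel a b" "Poly_Mapping.keys c \<subseteq> L"
  shows "rel (c + a) (c + b)"
proof -
  have "mono (c + a) - mono (c + b) = mono c * (mono a - mono b)"
    by (simp add: mono_add right_diff_distrib)
  moreover have "mono c \<in> polyring L" using assms(2) by (simp add: mono_in_polyring)
  ultimately show ?thesis using ideal_mult[OF RL] assms(1) unfolding rel_def by metis
qed

lemma rel_cong2:
  assumes "rel a b" "Poly_Mapping.keys c \<subseteq> L"
  shows "rel (a + c) (b + c)"
  using rel_cong[OF assms] by (simp add: add.commute)

lemma rel_G2:
  assumes "m \<in> L" "n \<in> L" "0 < m \<alpha>1" "0 < n \<alpha>2"
  shows "rel (Poly_Mapping.single m 1 + Poly_Mapping.single n 1)
             (Poly_Mapping.single (shf m 1) 1 + Poly_Mapping.single (shf n (-1)) 1)"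
proof -
  have "tvar m * tvar n - tvar (\<lambda>b. m b + charfun \<alpha>2 b - charfun \<alpha>1 b) * tvar (\<lambda>b. n b + charfun \<alpha>1 b - charfun \<alpha>2 b) \<in> GG"
    unfolding GG_def using assms by blast
  then have "tvar m * tvar n - tvar (\<lambda>b. m b + charfun \<alpha>2 b - charfun \<alpha>1 b) * tvar (\<lambda>b. n b + charfun \<alpha>1 b - charfun \<alpha>2 b) \<in> I"
    by (rule ideal_gen[OF RL])
  then show ?thesis unfolding rel_def shf_1 shf_m1 tvar_def mono_add .
qed

lemma rel_G1:
  assumes "s \<in> SS" "mono (xmon (A - {\<alpha>2}) (pimap \<alpha>1 \<alpha>2 s)) = phi (A - {\<alpha>2}) (mono (u i))"
  shows "rel (\<psi> s (u i)) (\<psi> s (v i))"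
proof -
  have "mono (\<psi> s (u i)) - mono (\<psi> s (v i)) \<in> GG"
    unfolding GG_def using assms by blast
  then show ?thesis unfolding rel_def by (rule ideal_gen[OF RL])
qed

lemma Qshift:
  "\<And>a m. Poly_Mapping.keys a \<subseteq> L \<Longrightarrow> m \<in> Poly_Mapping.keys a \<Longrightarrow> int k \<le> m \<alpha>1 \<Longrightarrow>
     int k \<le> expsum (a - Poly_Mapping.single m 1) \<alpha>2 \<Longrightarrow>
     \<exists>a'. rel a a' \<and> Poly_Mapping.keys a' \<subseteq> L \<and> pimon \<alpha>1 \<alpha>2 a' = pimon \<alpha>1 \<alpha>2 a \<and>
          expsum a' = expsum a \<and> degm a' = degm a \<and> shf m (int k) \<in> Poly_Mapping.keys a'"
proof (induction k)
  case (0 a m)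
  show ?case by (intro exI[of _ a] conjI rel_refl 0(1)) (simp_all add: 0(2))
next
  case (Suc k a m)
  define r0 where "r0 = a - Poly_Mapping.single m 1"
  have a_eq: "a = Poly_Mapping.single m 1 + r0" unfolding r0_def by (rule pm_split[OF Suc.prems(2)])
  have r0L: "Poly_Mapping.keys r0 \<subseteq> L" unfolding r0_def by (rule subset_trans[OF keys_diff_sub Suc.prems(1)])
  have mL: "m \<in> L" using subsetD[OF Suc.prems(1,2)] .
  have "0 < expsum r0 \<alpha>2" using Suc.prems(4) unfolding r0_def by simp
  from expsum_pos[OF this] obtain n where n: "n \<in> Poly_Mapping.keys r0" "0 < n \<alpha>2" by blast
  define r1 where "r1 = r0 - Poly_Mapping.single n 1"
  have r0_eq: "r0 = Poly_Mapping.single n 1 + r1" unfolding r1_def by (rule pm_split[OF n(1)])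
  have nL: "n \<in> L" using subsetD[OF r0L n(1)] .
  have r1L: "Poly_Mapping.keys r1 \<subseteq> L" unfolding r1_def by (rule subset_trans[OF keys_diff_sub r0L])
  have a_eq2: "a = (Poly_Mapping.single m 1 + Poly_Mapping.single n 1) + r1"
    using a_eq r0_eq by (simp add: add.assoc)
  define m1 where "m1 = shf m 1"
  define n1 where "n1 = shf n (-1)"
  define a1 where "a1 = Poly_Mapping.single m1 1 + (Poly_Mapping.single n1 1 + r1)"
  have ma1: "0 < m \<alpha>1" using Suc.prems(3) by simp
  have rel1: "rel a a1" unfolding a1_def m1_def n1_def a_eq2 add.assoc[symmetric]
    by (rule rel_cong2[OF rel_G2[OF mL nL ma1 n(2)] r1L])
  have m1L: "m1 \<in> L" unfolding m1_def by (rule shf_L[OF mL]) (use ma1 nabla_nonneg[OF mL, of \<alpha>2] in auto)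
  have n1L: "n1 \<in> L" unfolding n1_def by (rule shf_L[OF nL]) (use n(2) nabla_nonneg[OF nL, of \<alpha>1] in auto)
  have a1L: "Poly_Mapping.keys a1 \<subseteq> L" unfolding a1_def using m1L n1L r1L by (auto simp: keys_add_nat)
  have m1k: "m1 \<in> Poly_Mapping.keys a1" unfolding a1_def by (simp add: keys_add_nat)
  have a1m: "a1 - Poly_Mapping.single m1 1 = Poly_Mapping.single n1 1 + r1" unfolding a1_def by simp
  have e_r0: "expsum r0 \<alpha>2 = n \<alpha>2 + expsum r1 \<alpha>2" unfolding r0_eq by (simp add: expsum_add)
  have h1: "int k \<le> m1 \<alpha>1" unfolding m1_def using Suc.prems(3) by simp
  have h2: "int k \<le> expsum (a1 - Poly_Mapping.single m1 1) \<alpha>2"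
    unfolding a1m n1_def using Suc.prems(4) e_r0 unfolding r0_def[symmetric] by (simp add: expsum_add)
  from Suc.IH[OF a1L m1k h1 h2] obtain a' where a': "rel a1 a'" "Poly_Mapping.keys a' \<subseteq> L"
    "pimon \<alpha>1 \<alpha>2 a' = pimon \<alpha>1 \<alpha>2 a1" "expsum a' = expsum a1" "degm a' = degm a1"
    "shf m1 (int k) \<in> Poly_Mapping.keys a'" by blast
  have p1: "pimon \<alpha>1 \<alpha>2 a1 = pimon \<alpha>1 \<alpha>2 a"
    unfolding a1_def a_eq2 m1_def n1_def by (simp add: pimon_add add.assoc)
  have e1: "expsum a1 = expsum a"
    unfolding a1_def a_eq2 m1_def n1_def by (auto simp: expsum_add shf_def fun_eq_iff algebra_simps)
  have d1: "degm a1 = degm a"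
    unfolding a1_def a_eq2 by (simp add: degm_add)
  have "shf m1 (int k) = shf m (int (Suc k))" unfolding m1_def by (simp add: add.commute)
  then show ?case
    by (intro exI[of _ a'] conjI rel_trans[OF rel1 a'(1)] a'(2)) (use a' p1 e1 d1 in simp_all)
qed

end



context Q9b
begin

lemma shift_to:
  assumes aL: "Poly_Mapping.keys a \<subseteq> L" and bL: "Poly_Mapping.keys b \<subseteq> L"
    and eq: "expsum a = expsum b"
    and m: "m \<in> Poly_Mapping.keys a" and m': "m' \<in> Poly_Mapping.keys b"
    and pm: "pimap \<alpha>1 \<alpha>2 m' = pimap \<alpha>1 \<alpha>2 m" and le: "m' \<alpha>1 \<le> m \<alpha>1"
  shows "\<exists>a'. rel a a' \<and> Poly_Mapping.keys a' \<subseteq> L \<and> pimon \<alpha>1 \<alpha>2 a' = pimon \<alpha>1 \<alpha>2 a \<and>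
          expsum a' = expsum a \<and> degm a' = degm a \<and> m' \<in> Poly_Mapping.keys a'"
proof -
  have mL: "m \<in> L" using subsetD[OF aL m] .
  have m'L: "m' \<in> L" using subsetD[OF bL m'] .
  define j where "j = m \<alpha>1 - m' \<alpha>1"
  have j0: "0 \<le> j" using le unfolding j_def by simp
  have m'eq: "m' = shf m j" unfolding j_def
    by (rule pimap_eq_shf) (use pm mL m'L in auto)
  have h1: "int (nat j) \<le> m \<alpha>1" using j0 nabla_nonneg[OF m'L, of \<alpha>1] unfolding j_def by simp
  define ra where "ra = a - Poly_Mapping.single m 1"
  define rb where "rb = b - Poly_Mapping.single m' 1"
  have ae: "a = Poly_Mapping.single m 1 + ra" unfolding ra_def by (rule pm_split[OF m])
  have be: "b = Poly_Mapping.single m' 1 + rb" unfolding rb_def by (rule pm_split[OF m'])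
  have rbL: "Poly_Mapping.keys rb \<subseteq> L" unfolding rb_def by (rule subset_trans[OF keys_diff_sub bL])
  have "expsum a \<alpha>2 = m \<alpha>2 + expsum ra \<alpha>2" by (subst ae) (simp add: expsum_add)
  moreover have "expsum b \<alpha>2 = m' \<alpha>2 + expsum rb \<alpha>2" by (subst be) (simp add: expsum_add)
  moreover have "0 \<le> expsum rb \<alpha>2" by (rule expsum_nonneg[OF rbL])
  moreover have "m' \<alpha>2 = m \<alpha>2 + j" using m'eq by simp
  ultimately have h2: "int (nat j) \<le> expsum (a - Poly_Mapping.single m 1) \<alpha>2"
    using eq j0 unfolding ra_def[symmetric] by simp
  from Qshift[OF aL m h1 h2] obtain a' where a': "rel a a'" "Poly_Mapping.keys a' \<subseteq> L"
    "pimon \<alpha>1 \<alpha>2 a' = pimon \<alpha>1 \<alpha>2 a" "expsum a' = expsum a" "degm a' = degm a"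
    "shf m (int (nat j)) \<in> Poly_Mapping.keys a'" by blast
  have "shf m (int (nat j)) = m'" using j0 m'eq by simp
  then show ?thesis using a' by metis
qed

lemma G2claim:
  "\<And>a b. degm a = d \<Longrightarrow> Poly_Mapping.keys a \<subseteq> L \<Longrightarrow> Poly_Mapping.keys b \<subseteq> L \<Longrightarrow>
     pimon \<alpha>1 \<alpha>2 a = pimon \<alpha>1 \<alpha>2 b \<Longrightarrow> expsum a = expsum b \<Longrightarrow> rel a b"
proof (induction d)
  case (0 a b)
  have a0: "a = 0" using 0(1) degm_eq_0 by blast
  have "degm b = 0" using 0(1,4) degm_pimon by metis
  then have "b = 0" using degm_eq_0 by blast
  then show ?case using a0 rel_refl by simp
next
  case (Suc d a b)
  have common: "rel x y" if x: "degm x = Suc d" "Poly_Mapping.keys x \<subseteq> L" "Poly_Mapping.keys y \<subseteq> L"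
    "pimon \<alpha>1 \<alpha>2 x = pimon \<alpha>1 \<alpha>2 y" "expsum x = expsum y" "c \<in> Poly_Mapping.keys x" "c \<in> Poly_Mapping.keys y"
    for x y c
  proof -
    define x0 where "x0 = x - Poly_Mapping.single c 1"
    define y0 where "y0 = y - Poly_Mapping.single c 1"
    have xe: "x = Poly_Mapping.single c 1 + x0" unfolding x0_def by (rule pm_split[OF x(6)])
    have ye: "y = Poly_Mapping.single c 1 + y0" unfolding y0_def by (rule pm_split[OF x(7)])
    have x0L: "Poly_Mapping.keys x0 \<subseteq> L" unfolding x0_def by (rule subset_trans[OF keys_diff_sub x(2)])
    have y0L: "Poly_Mapping.keys y0 \<subseteq> L" unfolding y0_def by (rule subset_trans[OF keys_diff_sub x(3)])
    have d0: "degm x0 = d" using x(1) xe degm_add[of "Poly_Mapping.single c 1" x0] by simp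
    have "Poly_Mapping.single (pimap \<alpha>1 \<alpha>2 c) 1 + pimon \<alpha>1 \<alpha>2 x0 = Poly_Mapping.single (pimap \<alpha>1 \<alpha>2 c) 1 + pimon \<alpha>1 \<alpha>2 y0"
      using x(4) xe ye pimon_add by (metis pimon_single)
    then have p0: "pimon \<alpha>1 \<alpha>2 x0 = pimon \<alpha>1 \<alpha>2 y0" by simp
    have e0: "expsum x0 = expsum y0" by (rule expsum_cancel) (use x(5) xe ye in simp)
    have "rel x0 y0" by (rule Suc.IH[OF d0 x0L y0L p0 e0])
    moreover have "Poly_Mapping.keys (Poly_Mapping.single c 1) \<subseteq> L" using x(2,6) by auto
    ultimately have "rel (Poly_Mapping.single c 1 + x0) (Poly_Mapping.single c 1 + y0)" by (rule rel_cong)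
    then show ?thesis using xe ye by simp
  qed
  have "a \<noteq> 0" using Suc.prems(1) by auto
  then obtain m where m: "m \<in> Poly_Mapping.keys a" using keys_eq_empty by blast
  have "pimap \<alpha>1 \<alpha>2 m \<in> Poly_Mapping.keys (pimon \<alpha>1 \<alpha>2 b)" using pimap_in_keys[OF m, of \<alpha>1 \<alpha>2] Suc.prems(4) by simp
  then obtain m' where m': "m' \<in> Poly_Mapping.keys b" "pimap \<alpha>1 \<alpha>2 m' = pimap \<alpha>1 \<alpha>2 m"
    using subsetD[OF keys_pimon[of \<alpha>1 \<alpha>2 b]] by (metis imageE)
  have db: "degm b = Suc d" using Suc.prems(1,4) degm_pimon by metis
  show ?case
  proof (cases "m' \<alpha>1 \<le> m \<alpha>1")
    case True
    from shift_to[OF Suc.prems(2,3,5) m m'(1,2) True] obtain a' where a': "rel a a'" "Poly_Mapping.keys a' \<subseteq> L"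
      "pimon \<alpha>1 \<alpha>2 a' = pimon \<alpha>1 \<alpha>2 a" "expsum a' = expsum a" "degm a' = degm a" "m' \<in> Poly_Mapping.keys a'"
      by blast
    have "rel a' b"
      by (rule common[OF _ a'(2) Suc.prems(3) _ _ a'(6) m'(1)]) (use a' Suc.prems in auto)
    then show ?thesis using rel_trans[OF a'(1)] by blast
  next
    case False
    then have le: "m \<alpha>1 \<le> m' \<alpha>1" by simp
    from shift_to[OF Suc.prems(3,2) Suc.prems(5)[symmetric] m'(1) m m'(2)[symmetric] le] obtain b' where b': "rel b b'" "Poly_Mapping.keys b' \<subseteq> L"
      "pimon \<alpha>1 \<alpha>2 b' = pimon \<alpha>1 \<alpha>2 b" "expsum b' = expsum b" "degm b' = degm b" "m \<in> Poly_Mapping.keys b'"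
      by blast
    have "rel a b'"
      by (rule common[OF Suc.prems(1,2) b'(2) _ _ m b'(6)]) (use b' Suc.prems in auto)
    then show ?thesis using rel_trans rel_sym[OF b'(1)] by blast
  qed
qed

end



definition mv :: "('l \<Rightarrow> ('x \<Rightarrow>\<^sub>0 nat)) \<Rightarrow> ('l \<Rightarrow> ('x \<Rightarrow>\<^sub>0 nat)) \<Rightarrow> ('x \<Rightarrow>\<^sub>0 nat) \<Rightarrow> ('x \<Rightarrow>\<^sub>0 nat) \<Rightarrow> bool" where
  "mv u v x y \<longleftrightarrow> (\<exists>w i. (x = w + u i \<and> y = w + v i) \<or> (x = w + v i \<and> y = w + u i))"

definition lam :: "('x \<Rightarrow>\<^sub>0 nat) set \<Rightarrow> (('x \<Rightarrow>\<^sub>0 nat) \<Rightarrow>\<^sub>0 complex) \<Rightarrow> complex" where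
  "lam C p = (\<Sum>x\<in>Poly_Mapping.keys p. if x \<in> C then Poly_Mapping.lookup p x else 0)"

lemma lam_add: "lam C (p + q) = lam C p + lam C q"
  unfolding lam_def by (rule setsum_keys_plus_distrib) auto

lemma lam_single: "lam C (Poly_Mapping.single x c) = (if x \<in> C then c else 0)"
  by (simp add: lam_def)

lemma lam_zero: "lam C 0 = 0" by (simp add: lam_def)

lemma lam_uminus: "lam C (- p) = - lam C p"
proof -
  have "lam C (p + - p) = 0" by (simp add: lam_zero)
  then show ?thesis unfolding lam_add by (simp add: eq_neg_iff_add_eq_0 add.commute)
qed

lemma lam_diff: "lam C (p - q) = lam C p - lam C q"
  using lam_add[of C p "-q"] lam_uminus[of C q] by simp

lemma lam_sum: "finite T \<Longrightarrow> lam C (\<Sum>g\<in>T. f g) = (\<Sum>g\<in>T. lam C (f g))"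
  by (induction T rule: finite_induct) (auto simp: lam_zero lam_add)

definition hw :: "('x \<Rightarrow>\<^sub>0 nat) set \<Rightarrow> ('x \<Rightarrow>\<^sub>0 nat) \<Rightarrow> (('x \<Rightarrow>\<^sub>0 nat) \<Rightarrow>\<^sub>0 complex) \<Rightarrow> complex" where
  "hw C w c = (\<Sum>z\<in>Poly_Mapping.keys c. if z + w \<in> C then Poly_Mapping.lookup c z else 0)"

lemma hw_add: "hw C w (p + q) = hw C w p + hw C w q"
  unfolding hw_def by (rule setsum_keys_plus_distrib) auto

lemma lam_mult_mono: "lam C (c * mono w) = hw C w c"
proof (induction c rule: Poly_Mapping.update_induct)
  case const
  then show ?case by (simp add: lam_zero hw_def)
next
  case (update f k b)
  have e: "Poly_Mapping.update k b f = Poly_Mapping.single k b + f" by (rule update_single_add[OF update(1)])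
  show ?case unfolding e distrib_right lam_add hw_add update(3)
    by (simp add: mono_def mult_single lam_single hw_def)
qed

lemma conn:
  fixes u v :: "'l \<Rightarrow> ('x \<Rightarrow>\<^sub>0 nat)"
  assumes "mono a - mono b \<in> ideal_gen_in R (range (\<lambda>i. mono (u i) - mono (v i)))"
  shows "(mv u v)\<^sup>*\<^sup>* a b"
proof (rule ccontr)
  assume nb: "\<not> (mv u v)\<^sup>*\<^sup>* a b"
  define C where "C = {x. (mv u v)\<^sup>*\<^sup>* a x}"
  have aC: "a \<in> C" unfolding C_def by simp
  have bC: "b \<notin> C" using nb unfolding C_def by simp
  have clos: "y \<in> C" if "x \<in> C" "mv u v x y" for x y
    using that unfolding C_def by (auto intro: rtranclp.rtrancl_into_rtrancl)
  have equiv: "z + u i \<in> C \<longleftrightarrow> z + v i \<in> C" for z i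
  proof
    assume "z + u i \<in> C"
    moreover have "mv u v (z + u i) (z + v i)" unfolding mv_def by blast
    ultimately show "z + v i \<in> C" by (rule clos)
  next
    assume "z + v i \<in> C"
    moreover have "mv u v (z + v i) (z + u i)" unfolding mv_def by blast
    ultimately show "z + u i \<in> C" by (rule clos)
  qed
  have gen0: "lam C (c * (mono (u i) - mono (v i))) = 0" for c i
  proof -
    have "hw C (u i) c = hw C (v i) c" unfolding hw_def using equiv by (intro sum.cong) auto
    then show ?thesis by (simp add: right_diff_distrib lam_diff lam_mult_mono)
  qed
  obtain T c where T: "finite T" "T \<subseteq> range (\<lambda>i. mono (u i) - mono (v i))"
    "mono a - mono b = (\<Sum>g\<in>T. c g * g)"
    using assms unfolding ideal_gen_in_def by blast
  have "lam C (mono a - mono b) = (\<Sum>g\<in>T. lam C (c g * g))" unfolding T(3) by (rule lam_sum[OF T(1)])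
  also have "\<dots> = 0"
  proof (rule sum.neutral, rule ballI)
    fix g assume "g \<in> T"
    then obtain i where "g = mono (u i) - mono (v i)" using T(2) by blast
    then show "lam C (c g * g) = 0" using gen0 by simp
  qed
  finally have "lam C (mono a - mono b) = 0" .
  moreover have "lam C (mono a - mono b) = 1" using aC bC by (simp add: mono_def lam_diff lam_single)
  ultimately show False by simp
qed

lemma pm_add_eq_0:
  fixes y z :: "'k \<Rightarrow>\<^sub>0 nat"
  assumes "y + z = 0" shows "y = 0" "z = 0"
  using assms by (auto simp: poly_mapping_eq_iff fun_eq_iff lookup_add)

lemma pimon_split:
  "\<And>y z. pimon a1 a2 x = y + z \<Longrightarrow> \<exists>x1 x2. x = x1 + x2 \<and> pimon a1 a2 x1 = y \<and> pimon a1 a2 x2 = z"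
proof (induction x rule: nat_pm_induct)
  case (zero y z)
  then have "y = 0" "z = 0" using pm_add_eq_0[of y z] by auto
  then show ?case by (intro exI[of _ 0]) simp
next
  case (add m x y z)
  let ?pm = "pimap a1 a2 m"
  have eq: "Poly_Mapping.single ?pm 1 + pimon a1 a2 x = y + z" using add.prems by (simp add: pimon_add)
  have "Poly_Mapping.lookup (y + z) ?pm \<ge> 1" unfolding eq[symmetric] by (simp add: lookup_add)
  then have "?pm \<in> Poly_Mapping.keys y \<or> ?pm \<in> Poly_Mapping.keys z" by (auto simp: lookup_add in_keys_iff)
  then show ?case
  proof
    assume k: "?pm \<in> Poly_Mapping.keys y"
    define y0 where "y0 = y - Poly_Mapping.single ?pm 1"
    have ye: "y = Poly_Mapping.single ?pm 1 + y0" unfolding y0_def by (rule pm_split[OF k])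
    have "pimon a1 a2 x = y0 + z" using eq unfolding ye by (simp add: add.assoc)
    from add.IH[OF this] obtain x1 x2 where "x = x1 + x2" "pimon a1 a2 x1 = y0" "pimon a1 a2 x2 = z" by blast
    then show ?case using ye
      by (intro exI[of _ "Poly_Mapping.single m 1 + x1"] exI[of _ x2]) (simp_all add: add.assoc pimon_add)
  next
    assume k: "?pm \<in> Poly_Mapping.keys z"
    define z0 where "z0 = z - Poly_Mapping.single ?pm 1"
    have ze: "z = Poly_Mapping.single ?pm 1 + z0" unfolding z0_def by (rule pm_split[OF k])
    have "Poly_Mapping.single ?pm 1 + pimon a1 a2 x = Poly_Mapping.single ?pm 1 + (y + z0)"
      using eq unfolding ze by (simp add: ac_simps)
    then have "pimon a1 a2 x = y + z0" by simp
    from add.IH[OF this] obtain x1 x2 where "x = x1 + x2" "pimon a1 a2 x1 = y" "pimon a1 a2 x2 = z0" by blast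
    then show ?case using ze
      by (intro exI[of _ x1] exI[of _ "Poly_Mapping.single m 1 + x2"]) (simp_all add: ac_simps pimon_add)
  qed
qed

lemma pm_sum_singles: "p = (\<Sum>u\<in>Poly_Mapping.keys p. Poly_Mapping.single u (Poly_Mapping.lookup p u))"
proof (rule poly_mapping_eqI)
  fix z
  show "Poly_Mapping.lookup p z = Poly_Mapping.lookup (\<Sum>u\<in>Poly_Mapping.keys p. Poly_Mapping.single u (Poly_Mapping.lookup p u)) z"
    by (auto simp: lookup_sum lookup_single when_def in_keys_iff)
qed



context Q9b
begin

lemma RL': "ringlike (polyring L')" by (rule ringlike_polyring)

lemma uv_ker: "mono (u i) - mono (v i) \<in> ker_phi (A - {\<alpha>2}) L'"
  unfolding gens'[symmetric] by (rule ideal_gen[OF RL']) blast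

lemma uv_phi: "phi (A - {\<alpha>2}) (mono (u i)) = phi (A - {\<alpha>2}) (mono (v i))"
  using uv_ker[of i] unfolding ker_phi_def by (simp add: phi_diff)

lemma uL': "Poly_Mapping.keys (u i) \<subseteq> L'" and vL': "Poly_Mapping.keys (v i) \<subseteq> L'"
  using uv_mon[of i] by (auto simp: monomials_in_def)

lemma psi_facts:
  assumes "s \<in> SS" "Poly_Mapping.keys w \<subseteq> L'"
    "phi (A - {\<alpha>2}) (mono w) = mono (xmon (A - {\<alpha>2}) (pimap \<alpha>1 \<alpha>2 s))"
  shows "Poly_Mapping.keys (\<psi> s w) \<subseteq> L" "pimon \<alpha>1 \<alpha>2 (\<psi> s w) = w"
    "phi A (mono (\<psi> s w)) = mono (xmon A s)"
  using psi[OF assms(1) _ assms(3)] assms(2) by (auto simp: monomials_in_def)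

lemma lift_gen:
  assumes aL: "Poly_Mapping.keys a \<subseteq> L" and pa: "pimon \<alpha>1 \<alpha>2 a = w + p"
    and pL: "Poly_Mapping.keys p \<subseteq> L'" and qL: "Poly_Mapping.keys q \<subseteq> L'"
    and pq: "phi (A - {\<alpha>2}) (mono p) = phi (A - {\<alpha>2}) (mono q)"
    and H: "\<And>s. s \<in> SS \<Longrightarrow> phi (A - {\<alpha>2}) (mono p) = mono (xmon (A - {\<alpha>2}) (pimap \<alpha>1 \<alpha>2 s)) \<Longrightarrow> rel (\<psi> s p) (\<psi> s q)"
  shows "\<exists>a'. rel a a' \<and> Poly_Mapping.keys a' \<subseteq> L \<and> pimon \<alpha>1 \<alpha>2 a' = w + q \<and> expsum a' = expsum a"
proof -
  from pimon_split[OF pa] obtain a1 a2 where sp: "a = a1 + a2" "pimon \<alpha>1 \<alpha>2 a1 = w" "pimon \<alpha>1 \<alpha>2 a2 = p"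
    by blast
  have a1L: "Poly_Mapping.keys a1 \<subseteq> L" and a2L: "Poly_Mapping.keys a2 \<subseteq> L"
    using aL unfolding sp(1) by (auto simp: keys_add_nat)
  define s where "s = expsum a2"
  have sS: "s \<in> SS" unfolding s_def by (rule expsum_S[OF a2L])
  have cond: "phi (A - {\<alpha>2}) (mono p) = mono (xmon (A - {\<alpha>2}) (pimap \<alpha>1 \<alpha>2 s))"
    unfolding s_def sp(3)[symmetric] by (simp add: phi_mono expsum_pimon)
  have condq: "phi (A - {\<alpha>2}) (mono q) = mono (xmon (A - {\<alpha>2}) (pimap \<alpha>1 \<alpha>2 s))"
    using cond pq by simp
  note P = psi_facts[OF sS pL cond]
  note Q = psi_facts[OF sS qL condq]
  have ph2: "phi A (mono a2) = mono (xmon A s)" unfolding s_def by (simp add: phi_mono)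
  have e1: "expsum (\<psi> s p) = expsum a2"
    using expsum_L_eq[OF P(1) a2L] P(3) ph2 by simp
  have e2: "expsum (\<psi> s q) = expsum a2"
    using expsum_L_eq[OF Q(1) a2L] Q(3) ph2 by simp
  have r1: "rel a2 (\<psi> s p)"
    by (rule G2claim[OF refl a2L P(1)]) (use sp(3) P(2) e1 in auto)
  have r2: "rel (\<psi> s p) (\<psi> s q)" by (rule H[OF sS cond])
  have "rel (a1 + a2) (a1 + \<psi> s q)" by (rule rel_cong[OF rel_trans[OF r1 r2] a1L])
  moreover have "Poly_Mapping.keys (a1 + \<psi> s q) \<subseteq> L" using a1L Q(1) by (auto simp: keys_add_nat)
  moreover have "pimon \<alpha>1 \<alpha>2 (a1 + \<psi> s q) = w + q" using sp(2) Q(2) by (simp add: pimon_add)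
  moreover have "expsum (a1 + \<psi> s q) = expsum a" unfolding sp(1) by (simp add: expsum_add e2)
  ultimately show ?thesis unfolding sp(1)[symmetric] by blast
qed

lemma lift_chain:
  assumes "(mv u v)\<^sup>*\<^sup>* x y" "Poly_Mapping.keys a \<subseteq> L" "pimon \<alpha>1 \<alpha>2 a = x"
  shows "\<exists>a'. rel a a' \<and> Poly_Mapping.keys a' \<subseteq> L \<and> pimon \<alpha>1 \<alpha>2 a' = y \<and> expsum a' = expsum a"
  using assms(1)
proof (induction rule: rtranclp_induct)
  case base
  then show ?case using assms(2,3) rel_refl by blast
next
  case (step y z)
  from step.IH obtain a' where a': "rel a a'" "Poly_Mapping.keys a' \<subseteq> L" "pimon \<alpha>1 \<alpha>2 a' = y" "expsum a' = expsum a"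
    by blast
  from step.hyps(2) obtain w i where wi: "(y = w + u i \<and> z = w + v i) \<or> (y = w + v i \<and> z = w + u i)"
    unfolding mv_def by blast
  then have "\<exists>a''. rel a' a'' \<and> Poly_Mapping.keys a'' \<subseteq> L \<and> pimon \<alpha>1 \<alpha>2 a'' = z \<and> expsum a'' = expsum a'"
  proof
    assume h: "y = w + u i \<and> z = w + v i"
    have H: "rel (\<psi> s (u i)) (\<psi> s (v i))"
      if "s \<in> SS" "phi (A - {\<alpha>2}) (mono (u i)) = mono (xmon (A - {\<alpha>2}) (pimap \<alpha>1 \<alpha>2 s))" for s
      by (rule rel_G1) (use that in auto)
    show ?thesis using lift_gen[OF a'(2) _ uL' vL' uv_phi H] a'(3) h by blast
  next
    assume h: "y = w + v i \<and> z = w + u i"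
    have H: "rel (\<psi> s (v i)) (\<psi> s (u i))"
      if "s \<in> SS" "phi (A - {\<alpha>2}) (mono (v i)) = mono (xmon (A - {\<alpha>2}) (pimap \<alpha>1 \<alpha>2 s))" for s
      by (rule rel_sym, rule rel_G1) (use that uv_phi[of i] in auto)
    show ?thesis using lift_gen[OF a'(2) _ vL' uL' uv_phi[symmetric] H] a'(3) h by blast
  qed
  then obtain a'' where "rel a' a''" "Poly_Mapping.keys a'' \<subseteq> L" "pimon \<alpha>1 \<alpha>2 a'' = z" "expsum a'' = expsum a'"
    by blast
  then show ?case using a' rel_trans by metis
qed

lemma main_claim:
  assumes aL: "Poly_Mapping.keys a \<subseteq> L" and bL: "Poly_Mapping.keys b \<subseteq> L" and e: "expsum a = expsum b"
  shows "rel a b"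
proof -
  have paL: "Poly_Mapping.keys (pimon \<alpha>1 \<alpha>2 a) \<subseteq> L'" by (rule pimon_keys[OF aL])
  have pbL: "Poly_Mapping.keys (pimon \<alpha>1 \<alpha>2 b) \<subseteq> L'" by (rule pimon_keys[OF bL])
  have "mono (pimon \<alpha>1 \<alpha>2 a) - mono (pimon \<alpha>1 \<alpha>2 b) \<in> polyring L'"
  proof -
    have "mono (pimon \<alpha>1 \<alpha>2 a) \<in> polyring L'" "- mono (pimon \<alpha>1 \<alpha>2 b) \<in> polyring L'"
      using RL' paL pbL unfolding ringlike_def by (simp_all add: mono_in_polyring)
    then show ?thesis using RL' unfolding ringlike_def by (metis diff_conv_add_uminus)
  qed
  moreover have "phi (A - {\<alpha>2}) (mono (pimon \<alpha>1 \<alpha>2 a) - mono (pimon \<alpha>1 \<alpha>2 b)) = 0"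
    by (simp add: phi_diff phi_mono expsum_pimon e)
  ultimately have "mono (pimon \<alpha>1 \<alpha>2 a) - mono (pimon \<alpha>1 \<alpha>2 b) \<in> ideal_gen_in (polyring L') (range (\<lambda>i. mono (u i) - mono (v i)))"
    unfolding gens' ker_phi_def by blast
  then have "(mv u v)\<^sup>*\<^sup>* (pimon \<alpha>1 \<alpha>2 a) (pimon \<alpha>1 \<alpha>2 b)" by (rule conn)
  from lift_chain[OF this aL refl] obtain a' where a': "rel a a'" "Poly_Mapping.keys a' \<subseteq> L"
    "pimon \<alpha>1 \<alpha>2 a' = pimon \<alpha>1 \<alpha>2 b" "expsum a' = expsum a" by blast
  have "rel a' b" by (rule G2claim[OF refl a'(2) bL a'(3)]) (use a'(4) e in simp)
  then show ?thesis using rel_trans[OF a'(1)] by blast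
qed

end



lemma phi_sum: "finite T \<Longrightarrow> phi A (\<Sum>g\<in>T. f g) = (\<Sum>g\<in>T. phi A (f g))"
  by (induction T rule: finite_induct) (auto simp: phi_add)

lemma lookup_phi: "Poly_Mapping.lookup (phi A p) y = (\<Sum>u\<in>Poly_Mapping.keys p. if xmon A (expsum u) = y then Poly_Mapping.lookup p u else 0)"
  unfolding phi_def lookup_sum by (simp add: lookup_single when_def)

context Q9b
begin

lemma xmon_expsum_iff:
  assumes "Poly_Mapping.keys a \<subseteq> L" "Poly_Mapping.keys b \<subseteq> L"
  shows "xmon A (expsum a) = xmon A (expsum b) \<longleftrightarrow> expsum a = expsum b"
  using expsum_L_eq[OF assms] by (simp add: phi_mono mono_eq_iff)

lemma ker_sub:
  assumes p: "p \<in> ker_phi A L"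
  shows "p \<in> I"
proof -
  have pL: "\<And>u. u \<in> Poly_Mapping.keys p \<Longrightarrow> Poly_Mapping.keys u \<subseteq> L" and ph: "phi A p = 0"
    using p unfolding ker_phi_def polyring_def by auto
  define r where "r u = (SOME u'. u' \<in> Poly_Mapping.keys p \<and> expsum u' = expsum u)" for u
  have r: "r u \<in> Poly_Mapping.keys p \<and> expsum (r u) = expsum u" if "u \<in> Poly_Mapping.keys p" for u
    unfolding r_def by (rule someI[of _ u]) (use that in simp)
  have req: "r u = r u0 \<longleftrightarrow> xmon A (expsum u) = xmon A (expsum u0)"
    if "u \<in> Poly_Mapping.keys p" "u0 \<in> Poly_Mapping.keys p" for u u0
  proof
    assume "r u = r u0"
    then have "expsum u = expsum u0" using r[OF that(1)] r[OF that(2)] by metis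
    then show "xmon A (expsum u) = xmon A (expsum u0)" by simp
  next
    assume "xmon A (expsum u) = xmon A (expsum u0)"
    then have "expsum u = expsum u0" using xmon_expsum_iff[OF pL[OF that(1)] pL[OF that(2)]] by simp
    then show "r u = r u0" unfolding r_def by simp
  qed
  define Q where "Q = (\<Sum>u\<in>Poly_Mapping.keys p. Poly_Mapping.single (r u) (Poly_Mapping.lookup p u))"
  have Q0: "Q = 0"
  proof (rule poly_mapping_eqI)
    fix z
    have lq: "Poly_Mapping.lookup Q z = (\<Sum>u\<in>Poly_Mapping.keys p. if r u = z then Poly_Mapping.lookup p u else 0)"
      unfolding Q_def lookup_sum by (simp add: lookup_single when_def)
    show "Poly_Mapping.lookup Q z = Poly_Mapping.lookup 0 z"
    proof (cases "\<exists>u0\<in>Poly_Mapping.keys p. r u0 = z")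
      case True
      then obtain u0 where u0: "u0 \<in> Poly_Mapping.keys p" "r u0 = z" by blast
      have "Poly_Mapping.lookup Q z = (\<Sum>u\<in>Poly_Mapping.keys p. if xmon A (expsum u) = xmon A (expsum u0) then Poly_Mapping.lookup p u else 0)"
        unfolding lq by (rule sum.cong[OF refl]) (use req[OF _ u0(1)] u0(2) in auto)
      also have "\<dots> = Poly_Mapping.lookup (phi A p) (xmon A (expsum u0))" by (simp add: lookup_phi)
      finally show ?thesis using ph by simp
    next
      case False
      then show ?thesis unfolding lq by (auto intro: sum.neutral)
    qed
  qed
  have tm: "Poly_Mapping.single 0 (Poly_Mapping.lookup p u) * (mono u - mono (r u))
      = Poly_Mapping.single u (Poly_Mapping.lookup p u) - Poly_Mapping.single (r u) (Poly_Mapping.lookup p u)" for u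
    by (simp add: mono_def right_diff_distrib mult_single)
  have "p = p - Q" using Q0 by simp
  also have "\<dots> = (\<Sum>u\<in>Poly_Mapping.keys p. Poly_Mapping.single 0 (Poly_Mapping.lookup p u) * (mono u - mono (r u)))"
    unfolding tm sum_subtractf Q_def using pm_sum_singles[of p] by simp
  finally have pe: "p = \<dots>" .
  have "(\<Sum>u\<in>Poly_Mapping.keys p. Poly_Mapping.single 0 (Poly_Mapping.lookup p u) * (mono u - mono (r u))) \<in> I"
  proof (rule ideal_sum[OF RL finite_keys])
    fix u assume u: "u \<in> Poly_Mapping.keys p"
    have "rel u (r u)" by (rule main_claim[OF pL[OF u] pL[OF conjunct1[OF r[OF u]]] conjunct2[OF r[OF u], symmetric]])
    then have "mono u - mono (r u) \<in> I" unfolding rel_def .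
    moreover have "Poly_Mapping.single 0 (Poly_Mapping.lookup p u) \<in> polyring L" by (rule single_in_polyring) simp
    ultimately show "Poly_Mapping.single 0 (Poly_Mapping.lookup p u) * (mono u - mono (r u)) \<in> I"
      using ideal_mult[OF RL] by blast
  qed
  then show ?thesis using pe by simp
qed

lemma GG_shape:
  assumes "g \<in> GG"
  shows "\<exists>x y. g = mono x - mono y \<and> Poly_Mapping.keys x \<subseteq> L \<and> Poly_Mapping.keys y \<subseteq> L \<and> expsum x = expsum y"
  using assms unfolding GG_def
proof (elim UnE)
  assume "g \<in> {mono (\<psi> s (u i)) - mono (\<psi> s (v i)) | i s.
               s \<in> SS \<and> mono (xmon (A - {\<alpha>2}) (pimap \<alpha>1 \<alpha>2 s)) = phi (A - {\<alpha>2}) (mono (u i))}"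
  then obtain i s where g: "g = mono (\<psi> s (u i)) - mono (\<psi> s (v i))" "s \<in> SS"
    "phi (A - {\<alpha>2}) (mono (u i)) = mono (xmon (A - {\<alpha>2}) (pimap \<alpha>1 \<alpha>2 s))" by auto
  have cv: "phi (A - {\<alpha>2}) (mono (v i)) = mono (xmon (A - {\<alpha>2}) (pimap \<alpha>1 \<alpha>2 s))"
    using g(3) uv_phi[of i] by simp
  note P = psi_facts[OF g(2) uL' g(3)]
  note Q = psi_facts[OF g(2) vL' cv]
  have "expsum (\<psi> s (u i)) = expsum (\<psi> s (v i))"
    using expsum_L_eq[OF P(1) Q(1)] P(3) Q(3) by simp
  then show ?thesis using g(1) P(1) Q(1) by blast
next
  assume "g \<in> {tvar m * tvar n - tvar (\<lambda>b. m b + charfun \<alpha>2 b - charfun \<alpha>1 b) * tvar (\<lambda>b. n b + charfun \<alpha>1 b - charfun \<alpha>2 b) | m n.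
               m \<in> L \<and> n \<in> L \<and> m \<alpha>1 > 0 \<and> n \<alpha>2 > 0}"
  then obtain m n where g: "g = tvar m * tvar n - tvar (\<lambda>b. m b + charfun \<alpha>2 b - charfun \<alpha>1 b) * tvar (\<lambda>b. n b + charfun \<alpha>1 b - charfun \<alpha>2 b)"
    "m \<in> L" "n \<in> L" "0 < m \<alpha>1" "0 < n \<alpha>2" by auto
  define x :: "('a \<Rightarrow> int) \<Rightarrow>\<^sub>0 nat" where "x = Poly_Mapping.single m 1 + Poly_Mapping.single n 1"
  define y :: "('a \<Rightarrow> int) \<Rightarrow>\<^sub>0 nat" where "y = Poly_Mapping.single (shf m 1) 1 + Poly_Mapping.single (shf n (-1)) 1"
  have ge: "g = mono x - mono y" unfolding g(1) x_def y_def shf_1 shf_m1 tvar_def mono_add ..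
  have m1L: "shf m 1 \<in> L" by (rule shf_L[OF g(2)]) (use g(4) nabla_nonneg[OF g(2), of \<alpha>2] in auto)
  have n1L: "shf n (-1) \<in> L" by (rule shf_L[OF g(3)]) (use g(5) nabla_nonneg[OF g(3), of \<alpha>1] in auto)
  have xL: "Poly_Mapping.keys x \<subseteq> L" unfolding x_def using g(2,3) by (auto simp: keys_add_nat)
  have yL: "Poly_Mapping.keys y \<subseteq> L" unfolding y_def using m1L n1L by (auto simp: keys_add_nat)
  have "expsum x = expsum y" unfolding x_def y_def by (auto simp: expsum_add shf_def fun_eq_iff algebra_simps)
  then show ?thesis using ge xL yL by blast
qed

lemma gen_phi0:
  assumes c: "c \<in> polyring L" and xL: "Poly_Mapping.keys x \<subseteq> L" and yL: "Poly_Mapping.keys y \<subseteq> L"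
    and e: "expsum x = expsum y"
  shows "phi A (c * (mono x - mono y)) = 0"
proof -
  have xa: "xmon A (expsum (w + z)) = xmon A (expsum w) + xmon A (expsum z)"
    if "Poly_Mapping.keys w \<subseteq> L" "Poly_Mapping.keys z \<subseteq> L" for w z
    unfolding expsum_add by (rule xmon_add[OF finA]) (use expsum_nonneg[OF that(1)] expsum_nonneg[OF that(2)] in auto)
  have cu: "Poly_Mapping.keys w \<subseteq> L" if "w \<in> Poly_Mapping.keys c" for w
    using c that unfolding polyring_def by blast
  have "phi A (c * mono x) = phi A c * mono (xmon A (expsum x))"
    by (rule phi_mult_mono) (rule xa[OF cu xL])
  moreover have "phi A (c * mono y) = phi A c * mono (xmon A (expsum y))"
    by (rule phi_mult_mono) (rule xa[OF cu yL])
  ultimately show ?thesis using e by (simp add: right_diff_distrib phi_diff)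
qed

lemma I_sub:
  assumes p: "p \<in> I"
  shows "p \<in> ker_phi A L"
proof -
  have GGsub: "GG \<subseteq> polyring L"
  proof
    fix g assume "g \<in> GG"
    from GG_shape[OF this] obtain x y where xy: "g = mono x - mono y" "Poly_Mapping.keys x \<subseteq> L" "Poly_Mapping.keys y \<subseteq> L"
      by blast
    have "mono x \<in> polyring L" "- mono y \<in> polyring L"
      using RL xy unfolding ringlike_def by (simp_all add: mono_in_polyring)
    then show "g \<in> polyring L" using RL xy(1) unfolding ringlike_def by (metis diff_conv_add_uminus)
  qed
  have pR: "p \<in> polyring L" using ideal_subset[OF RL GGsub] p by blast
  obtain T c where T: "finite T" "T \<subseteq> GG" "\<forall>g\<in>T. c g \<in> polyring L" "p = (\<Sum>g\<in>T. c g * g)"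
    using p unfolding ideal_gen_in_def by blast
  have "phi A p = (\<Sum>g\<in>T. phi A (c g * g))" unfolding T(4) by (rule phi_sum[OF T(1)])
  also have "\<dots> = 0"
  proof (rule sum.neutral, rule ballI)
    fix g assume gT: "g \<in> T"
    then have "g \<in> GG" using T(2) by blast
    from GG_shape[OF this] obtain x y where xy: "g = mono x - mono y" "Poly_Mapping.keys x \<subseteq> L" "Poly_Mapping.keys y \<subseteq> L" "expsum x = expsum y"
      by blast
    have "phi A (c g * (mono x - mono y)) = 0" by (rule gen_phi0[OF _ xy(2,3,4)]) (use T(3) gT in blast)
    then show "phi A (c g * g) = 0" using xy(1) by simp
  qed
  finally show ?thesis using pR unfolding ker_phi_def by blast
qed

lemma I_eq: "I = ker_phi A L"
  using ker_sub I_sub by blast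

end

theorem proposition9p4:
  fixes V :: "'v set" and A :: "'a set" and src tgt :: "'a \<Rightarrow> 'v"
    and \<theta> :: "'v \<Rightarrow> int" and \<alpha>1 \<alpha>2 :: 'a
    and \<psi> :: "('a \<Rightarrow> int) \<Rightarrow> (('a \<Rightarrow> int) \<Rightarrow>\<^sub>0 nat) \<Rightarrow> (('a \<Rightarrow> int) \<Rightarrow>\<^sub>0 nat)"
    and u v :: "'l \<Rightarrow> (('a \<Rightarrow> int) \<Rightarrow>\<^sub>0 nat)"
  defines "L \<equiv> nabla_int V A src tgt \<theta>"
      and "L' \<equiv> nabla_int V (A - {\<alpha>2}) src tgt \<theta>"
      and "S \<equiv> S_monoid V A src tgt \<theta>"
  assumes quiver: "is_quiver V A src tgt"
    and acyclic: "no_oriented_cycles A src tgt"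
    and arrows: "\<alpha>1 \<in> A" "\<alpha>2 \<in> A" "\<alpha>1 \<noteq> \<alpha>2"
    and same_ends: "src \<alpha>1 = src \<alpha>2" "tgt \<alpha>1 = tgt \<alpha>2"
    and psi: "\<And>s w. s \<in> S \<Longrightarrow> w \<in> monomials_in L' \<Longrightarrow>
                 phi (A - {\<alpha>2}) (mono w) = mono (xmon (A - {\<alpha>2}) (pimap \<alpha>1 \<alpha>2 s)) \<Longrightarrow>
                 \<psi> s w \<in> monomials_in L \<and> pimon \<alpha>1 \<alpha>2 (\<psi> s w) = w \<and>
                 phi A (mono (\<psi> s w)) = mono (xmon A s)"
    and uv_mon: "\<And>i. u i \<in> monomials_in L'" "\<And>i. v i \<in> monomials_in L'"
    and gens': "ideal_gen_in (polyring L') (range (\<lambda>i. mono (u i) - mono (v i)))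
                  = ker_phi (A - {\<alpha>2}) L'"
  shows "ideal_gen_in (polyring L)
           ({mono (\<psi> s (u i)) - mono (\<psi> s (v i)) | i s.
               s \<in> S \<and> mono (xmon (A - {\<alpha>2}) (pimap \<alpha>1 \<alpha>2 s)) = phi (A - {\<alpha>2}) (mono (u i))}
            \<union> {tvar m * tvar n - tvar (\<lambda>b. m b + charfun \<alpha>2 b - charfun \<alpha>1 b) * tvar (\<lambda>b. n b + charfun \<alpha>1 b - charfun \<alpha>2 b) | m n.
               m \<in> L \<and> n \<in> L \<and> m \<alpha>1 > 0 \<and> n \<alpha>2 > 0})
         = ker_phi A L"
proof -
  interpret Q9b V A src tgt \<theta> \<alpha>1 \<alpha>2 \<psi> u v
  proof (unfold_locales)
    show "is_quiver V A src tgt" by (rule quiver)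
    show "\<alpha>1 \<in> A" "\<alpha>2 \<in> A" "\<alpha>1 \<noteq> \<alpha>2" by (rule arrows)+
    show "src \<alpha>1 = src \<alpha>2" "tgt \<alpha>1 = tgt \<alpha>2" by (rule same_ends)+
    show "\<And>s w. s \<in> S_monoid V A src tgt \<theta> \<Longrightarrow> w \<in> monomials_in (nabla_int V (A - {\<alpha>2}) src tgt \<theta>) \<Longrightarrow>
                 phi (A - {\<alpha>2}) (mono w) = mono (xmon (A - {\<alpha>2}) (pimap \<alpha>1 \<alpha>2 s)) \<Longrightarrow>
                 \<psi> s w \<in> monomials_in (nabla_int V A src tgt \<theta>) \<and> pimon \<alpha>1 \<alpha>2 (\<psi> s w) = w \<and>
                 phi A (mono (\<psi> s w)) = mono (xmon A s)"
      using psi unfolding S_def L_def L'_def by blast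
    show "\<And>i. u i \<in> monomials_in (nabla_int V (A - {\<alpha>2}) src tgt \<theta>)"
      "\<And>i. v i \<in> monomials_in (nabla_int V (A - {\<alpha>2}) src tgt \<theta>)"
      using uv_mon unfolding L'_def by blast+
    show "ideal_gen_in (polyring (nabla_int V (A - {\<alpha>2}) src tgt \<theta>)) (range (\<lambda>i. mono (u i) - mono (v i)))
                  = ker_phi (A - {\<alpha>2}) (nabla_int V (A - {\<alpha>2}) src tgt \<theta>)"
      using gens' unfolding L'_def .
  qed
  show ?thesis using I_eq unfolding GG_def L_def S_def .
qed



end
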